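(* Let $n\ge2$ be an integer. Then there is a bijection between the sets $\Sigma_{n^2}$ and $\Pi_n$.
   Context: $\Sigma_{n^2}$ is the set of all $n^2\times n^2$ permutation matrices (binary matrices with exactly one 1 in every row and every column) which, when partitioned into an $n\times n$ array of $n\times n$ blocks, have exactly one entry equal to 1 in each block. $\Pi_n$ is the set of all $n\times n$ matrices whose entries are ordered pairs $\langle a,b\rangle$ with $a,b\in\{1,\dots,n\}$ such that in every row the first components of the entries, read in order, form a permutation of $\{1,\dots,n\}$, and in every column the second components of the entries, read in order, form a permutation of $\{1,\dots,n\}$. *)

theory Defs
  imports "HOL-Library.FuncSet"
begin

text \<open>Matrices are represented as extensional functions on index pairs,
  with rows and columns indexed from 0. An (n^2 x n^2) matrix is partitioned
  into n x n blocks of size n x n; entry (i,j) lies in block (i div n, j div n).\<close>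

definition Sigma_sq :: "nat \<Rightarrow> (nat \<times> nat \<Rightarrow> nat) set" where
  "Sigma_sq n = {M. M \<in> ({0..<n^2} \<times> {0..<n^2}) \<rightarrow>\<^sub>E {0, 1} \<and>
      (\<forall>i<n^2. \<exists>!j. j < n^2 \<and> M (i, j) = 1) \<and>
      (\<forall>j<n^2. \<exists>!i. i < n^2 \<and> M (i, j) = 1) \<and>
      (\<forall>a<n. \<forall>b<n. \<exists>!p. p \<in> {0..<n^2} \<times> {0..<n^2} \<and>
           fst p div n = a \<and> snd p div n = b \<and> M p = 1)}"

definition Pi_n :: "nat \<Rightarrow> (nat \<times> nat \<Rightarrow> nat \<times> nat) set" where
  "Pi_n n = {M. M \<in> ({0..<n} \<times> {0..<n}) \<rightarrow>\<^sub>E ({1..n} \<times> {1..n}) \<and>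
      (\<forall>i<n. bij_betw (\<lambda>j. fst (M (i, j))) {0..<n} {1..n}) \<and>
      (\<forall>j<n. bij_betw (\<lambda>i. snd (M (i, j))) {0..<n} {1..n})}"

end

theory Submission
  imports Defs
begin

definition blk :: "nat \<Rightarrow> (nat \<times> nat \<Rightarrow> nat) \<Rightarrow> nat \<Rightarrow> nat \<Rightarrow> nat \<times> nat" where
  "blk n M a b = (THE p. p \<in> {0..<n^2} \<times> {0..<n^2} \<and>
           fst p div n = a \<and> snd p div n = b \<and> M p = 1)"

definition F :: "nat \<Rightarrow> (nat \<times> nat \<Rightarrow> nat) \<Rightarrow> (nat \<times> nat \<Rightarrow> nat \<times> nat)" where
  "F n M = restrict (\<lambda>(a,b). (fst (blk n M a b) mod n + 1, snd (blk n M a b) mod n + 1))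
             ({0..<n} \<times> {0..<n})"

definition G :: "nat \<Rightarrow> (nat \<times> nat \<Rightarrow> nat \<times> nat) \<Rightarrow> (nat \<times> nat \<Rightarrow> nat)" where
  "G n P = restrict (\<lambda>(i,j). if P (i div n, j div n) = (i mod n + 1, j mod n + 1) then 1 else 0)
             ({0..<n^2} \<times> {0..<n^2})"

lemma lt_sq_iff: "0 < (n::nat) \<Longrightarrow> (i < n^2) = (i div n < n)"
  by (simp add: power2_eq_square div_less_iff_less_mult mult.commute)

lemma Sig_ext: "M \<in> Sigma_sq n \<Longrightarrow> M \<in> ({0..<n^2} \<times> {0..<n^2}) \<rightarrow>\<^sub>E {0, 1}"
  unfolding Sigma_sq_def by (drule CollectD) (elim conjE)
lemma Sig_all: "M \<in> Sigma_sq n \<Longrightarrow>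
      (\<forall>i<n^2. \<exists>!j. j < n^2 \<and> M (i, j) = 1) \<and>
      (\<forall>j<n^2. \<exists>!i. i < n^2 \<and> M (i, j) = 1) \<and>
      (\<forall>a<n. \<forall>b<n. \<exists>!p. p \<in> {0..<n^2} \<times> {0..<n^2} \<and>
           fst p div n = a \<and> snd p div n = b \<and> M p = 1)"
  unfolding Sigma_sq_def by (drule CollectD) (elim conjE, intro conjI)
lemma Sig_row: "M \<in> Sigma_sq n \<Longrightarrow> i < n^2 \<Longrightarrow> \<exists>!j. j < n^2 \<and> M (i, j) = 1"
  by (drule Sig_all, elim conjE, erule allE, erule impE)
lemma Sig_col: "M \<in> Sigma_sq n \<Longrightarrow> j < n^2 \<Longrightarrow> \<exists>!i. i < n^2 \<and> M (i, j) = 1"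
  by (drule Sig_all, elim conjE, erule allE, erule impE)
lemma Sig_blk: "M \<in> Sigma_sq n \<Longrightarrow> a < n \<Longrightarrow> b < n \<Longrightarrow> \<exists>!p. p \<in> {0..<n^2} \<times> {0..<n^2} \<and>
           fst p div n = a \<and> snd p div n = b \<and> M p = 1"
  by (drule Sig_all, elim conjE, erule allE, erule impE, assumption, erule allE, erule impE)

definition inblk :: "nat \<Rightarrow> (nat \<times> nat \<Rightarrow> nat) \<Rightarrow> nat \<Rightarrow> nat \<Rightarrow> nat \<times> nat \<Rightarrow> bool" where
  "inblk n M a b p \<longleftrightarrow> p \<in> {0..<n^2} \<times> {0..<n^2} \<and> fst p div n = a \<and> snd p div n = b \<and> M p = 1"

lemma blk_alt: "blk n M a b = (THE p. inblk n M a b p)"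
  unfolding blk_def inblk_def by (rule refl)

lemma Sig_blk': "M \<in> Sigma_sq n \<Longrightarrow> a < n \<Longrightarrow> b < n \<Longrightarrow> \<exists>!p. inblk n M a b p"
  unfolding inblk_def by (rule Sig_blk)

lemma blk_props0: "M \<in> Sigma_sq n \<Longrightarrow> a < n \<Longrightarrow> b < n \<Longrightarrow> inblk n M a b (blk n M a b)"
  unfolding blk_alt by (rule theI', rule Sig_blk')

lemma blk_props:
  assumes "M \<in> Sigma_sq n" "a < n" "b < n"
  shows "blk n M a b \<in> {0..<n^2} \<times> {0..<n^2} \<and> fst (blk n M a b) div n = a \<and>
         snd (blk n M a b) div n = b \<and> M (blk n M a b) = 1"
  using blk_props0[OF assms] unfolding inblk_def .

lemma blk_unique:
  assumes "M \<in> Sigma_sq n" "p \<in> {0..<n^2} \<times> {0..<n^2}" "M p = 1"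
  shows "blk n M (fst p div n) (snd p div n) = p"
proof -
  have pos: "0 < n" using assms(2) by (cases "n = 0") auto
  have ab: "fst p div n < n" "snd p div n < n" using assms(2) lt_sq_iff[OF pos, of "fst p"] lt_sq_iff[OF pos, of "snd p"]
    by (simp_all add: mem_Times_iff)
  have u: "\<exists>!q. inblk n M (fst p div n) (snd p div n) q" by (rule Sig_blk'[OF assms(1) ab])
  have q: "inblk n M (fst p div n) (snd p div n) p" unfolding inblk_def using assms by simp
  show ?thesis unfolding blk_alt by (rule the1_equality[OF u q])
qed

lemma bij_from_inj:
  assumes "inj_on f {0..<n}" "f ` {0..<(n::nat)} \<subseteq> {1..(n::nat)}"
  shows "bij_betw f {0..<n} {1..n}"
proof -
  have "card (f ` {0..<n}) = card {1..n}" using card_image[OF assms(1)] by simp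
  then have "f ` {0..<n} = {1..n}" using card_subset_eq[OF _ assms(2)] by simp
  then show ?thesis using assms(1) by (simp add: bij_betw_def)
qed

lemma dm_eq: "(x::nat) div n = y div n \<Longrightarrow> x mod n = y mod n \<Longrightarrow> x = y"
  by (metis div_mult_mod_eq)

lemma ex1_same: "\<exists>!x. P x \<Longrightarrow> P a \<Longrightarrow> P b \<Longrightarrow> a = b"
  by blast

lemma F_val: "a < n \<Longrightarrow> b < n \<Longrightarrow>
   F n M (a,b) = (fst (blk n M a b) mod n + 1, snd (blk n M a b) mod n + 1)"
  unfolding F_def by simp

lemma mod_in: "0 < (n::nat) \<Longrightarrow> x mod n + 1 \<in> {1..n}"
  by (simp add: Suc_le_eq)

lemma F_in:
  assumes M: "M \<in> Sigma_sq n"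
  shows "F n M \<in> Pi_n n"
proof -
  have row: "bij_betw (\<lambda>j. fst (F n M (a, j))) {0..<n} {1..n}" if a: "a < n" for a
  proof (rule bij_from_inj)
    have n: "0 < n" using a by simp
    show "(\<lambda>j. fst (F n M (a, j))) ` {0..<n} \<subseteq> {1..n}"
      using F_val[OF a] mod_in[OF n] by auto
    show "inj_on (\<lambda>j. fst (F n M (a, j))) {0..<n}"
    proof (rule inj_onI)
      fix b b' assume b: "b \<in> {0..<n}" and b': "b' \<in> {0..<n}"
        and eq0: "fst (F n M (a, b)) = fst (F n M (a, b'))"
      have bb: "b < n" "b' < n" using b b' by auto
      define x where "x = blk n M a b"
      define y where "y = blk n M a b'"
      note P1 = blk_props[OF M a bb(1), folded x_def] and P2 = blk_props[OF M a bb(2), folded y_def]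
      have eq: "fst x mod n = fst y mod n" using eq0 F_val[OF a bb(1)] F_val[OF a bb(2)] x_def y_def by simp
      have fx: "fst x = fst y" by (rule dm_eq[where n=n]) (use P1 P2 eq in simp_all)
      have rx: "fst x < n^2" using P1 by (simp add: mem_Times_iff)
      have "snd x = snd y"
      proof (rule ex1_same[OF Sig_row[OF M rx]])
        show "snd x < n^2 \<and> M (fst x, snd x) = 1" using P1 by (simp add: mem_Times_iff)
        show "snd y < n^2 \<and> M (fst x, snd y) = 1" using P2 fx by (simp add: mem_Times_iff)
      qed
      then show "b = b'" using P1 P2 by simp
    qed
  qed
  have col: "bij_betw (\<lambda>i. snd (F n M (i, b))) {0..<n} {1..n}" if b: "b < n" for b
  proof (rule bij_from_inj)
    have n: "0 < n" using b by simp
    show "(\<lambda>i. snd (F n M (i, b))) ` {0..<n} \<subseteq> {1..n}"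
      using F_val[OF _ b] mod_in[OF n] by auto
    show "inj_on (\<lambda>i. snd (F n M (i, b))) {0..<n}"
    proof (rule inj_onI)
      fix a a' assume a: "a \<in> {0..<n}" and a': "a' \<in> {0..<n}"
        and eq0: "snd (F n M (a, b)) = snd (F n M (a', b))"
      have aa: "a < n" "a' < n" using a a' by auto
      define x where "x = blk n M a b"
      define y where "y = blk n M a' b"
      note P1 = blk_props[OF M aa(1) b, folded x_def] and P2 = blk_props[OF M aa(2) b, folded y_def]
      have eq: "snd x mod n = snd y mod n" using eq0 F_val[OF aa(1) b] F_val[OF aa(2) b] x_def y_def by simp
      have sx: "snd x = snd y" by (rule dm_eq[where n=n]) (use P1 P2 eq in simp_all)
      have cx: "snd x < n^2" using P1 by (simp add: mem_Times_iff)
      have "fst x = fst y"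
      proof (rule ex1_same[OF Sig_col[OF M cx]])
        show "fst x < n^2 \<and> M (fst x, snd x) = 1" using P1 by (simp add: mem_Times_iff)
        show "fst y < n^2 \<and> M (fst y, snd x) = 1" using P2 sx by (simp add: mem_Times_iff)
      qed
      then show "a = a'" using P1 P2 by simp
    qed
  qed
  have ext: "F n M \<in> ({0..<n} \<times> {0..<n}) \<rightarrow>\<^sub>E ({1..n} \<times> {1..n})"
  proof (rule PiE_I)
    fix x assume x: "x \<in> {0..<n} \<times> {0..<n}"
    then have n: "0 < n" by auto
    obtain a b where xe: "x = (a,b)" by (cases x)
    show "F n M x \<in> {1..n} \<times> {1..n}" using x xe F_val[of a n b M] mod_in[OF n] by auto
  next
    fix x assume "x \<notin> {0..<n} \<times> {0..<n}"
    then show "F n M x = undefined" unfolding F_def by simp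
  qed
  show ?thesis unfolding Pi_n_def mem_Collect_eq
    by (intro conjI allI impI ext row col)
qed

lemma Pi_ext: "P \<in> Pi_n n \<Longrightarrow> P \<in> ({0..<n} \<times> {0..<n}) \<rightarrow>\<^sub>E ({1..n} \<times> {1..n})"
  unfolding Pi_n_def by auto
lemma Pi_val: "P \<in> Pi_n n \<Longrightarrow> a < n \<Longrightarrow> b < n \<Longrightarrow> P (a,b) \<in> {1..n} \<times> {1..n}"
  by (rule PiE_mem[OF Pi_ext]) auto
lemma Pi_row: "P \<in> Pi_n n \<Longrightarrow> a < n \<Longrightarrow> bij_betw (\<lambda>j. fst (P (a, j))) {0..<n} {1..n}"
  unfolding Pi_n_def by auto
lemma Pi_col: "P \<in> Pi_n n \<Longrightarrow> b < n \<Longrightarrow> bij_betw (\<lambda>i. snd (P (i, b))) {0..<n} {1..n}"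
  unfolding Pi_n_def by auto

lemma G_eq1: "i < n^2 \<Longrightarrow> j < n^2 \<Longrightarrow> G n P (i,j) = 1 \<longleftrightarrow> P (i div n, j div n) = (i mod n + 1, j mod n + 1)"
  unfolding G_def by auto

lemma decomp_eq: "0 < (n::nat) \<Longrightarrow> j div n = b \<Longrightarrow> j mod n = c \<Longrightarrow> j = b*n + c"
  by (metis div_mult_mod_eq)

lemma bij_pt: "bij_betw f A B \<Longrightarrow> y \<in> B \<Longrightarrow> \<exists>x\<in>A. f x = y"
  unfolding bij_betw_def by blast

lemma bij_inj: "bij_betw f A B \<Longrightarrow> x \<in> A \<Longrightarrow> x' \<in> A \<Longrightarrow> f x = f x' \<Longrightarrow> x = x'"
  unfolding bij_betw_def inj_on_def by blast

lemma dm_calc: "0 < (n::nat) \<Longrightarrow> c < n \<Longrightarrow> (b*n+c) div n = b \<and> (b*n+c) mod n = c"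
  by simp

lemma val_dec: "x \<in> {1..(n::nat)} \<Longrightarrow> \<exists>c. c < n \<and> x = c + 1"
  by (rule exI[of _ "x - 1"]) auto

lemma G_in:
  assumes P: "P \<in> Pi_n n" and n: "0 < n"
  shows "G n P \<in> Sigma_sq n"
proof -
  have ext: "G n P \<in> ({0..<n^2} \<times> {0..<n^2}) \<rightarrow>\<^sub>E {0, 1}"
    by (rule PiE_I) (auto simp: G_def)
  have row: "\<exists>!j. j < n^2 \<and> G n P (i, j) = 1" if i: "i < n^2" for i
  proof -
    define a where "a = i div n"
    have a: "a < n" using i lt_sq_iff[OF n, of i] a_def by simp
    have r: "i mod n + 1 \<in> {1..n}" by (rule mod_in[OF n])
    obtain b where b: "b < n" "fst (P (a,b)) = i mod n + 1"
      using bij_pt[OF Pi_row[OF P a] r] by auto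
    obtain c where c: "c < n" "snd (P (a,b)) = c + 1"
      using val_dec[of "snd (P (a,b))" n] Pi_val[OF P a b(1)] by (auto simp: mem_Times_iff)
    define j where "j = b*n + c"
    have jd: "j div n = b" "j mod n = c" using dm_calc[OF n c(1), of b] j_def by auto
    have jl: "j < n^2" using jd b lt_sq_iff[OF n, of j] by simp
    have Pab: "P (a,b) = (i mod n + 1, c + 1)" using b c by (simp add: prod_eq_iff)
    show ?thesis
    proof (rule ex1I[of _ j])
      show "j < n^2 \<and> G n P (i, j) = 1" using jl jd Pab a_def G_eq1[OF i jl, of P] by simp
    next
      fix j' assume j': "j' < n^2 \<and> G n P (i, j') = 1"
      then have e: "P (a, j' div n) = (i mod n + 1, j' mod n + 1)"
        using a_def G_eq1[OF i, of j' P] by simp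
      have j'd: "j' div n < n" using j' lt_sq_iff[OF n, of j'] by simp
      have q1: "j' div n = b"
        by (rule bij_inj[OF Pi_row[OF P a]]) (use j'd b e in simp_all)
      have q2: "j' mod n = c" using e Pab q1 by simp
      show "j' = j" by (rule dm_eq[where n=n]) (use q1 q2 jd in simp_all)
    qed
  qed
  have col: "\<exists>!i. i < n^2 \<and> G n P (i, j) = 1" if j: "j < n^2" for j
  proof -
    define b where "b = j div n"
    have b: "b < n" using j lt_sq_iff[OF n, of j] b_def by simp
    have r: "j mod n + 1 \<in> {1..n}" by (rule mod_in[OF n])
    obtain a where a: "a < n" "snd (P (a,b)) = j mod n + 1"
      using bij_pt[OF Pi_col[OF P b] r] by auto
    obtain c where c: "c < n" "fst (P (a,b)) = c + 1"
      using val_dec[of "fst (P (a,b))" n] Pi_val[OF P a(1) b] by (auto simp: mem_Times_iff)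
    define i where "i = a*n + c"
    have id: "i div n = a" "i mod n = c" using dm_calc[OF n c(1), of a] i_def by auto
    have il: "i < n^2" using id a lt_sq_iff[OF n, of i] by simp
    have Pab: "P (a,b) = (c + 1, j mod n + 1)" using a c by (simp add: prod_eq_iff)
    show ?thesis
    proof (rule ex1I[of _ i])
      show "i < n^2 \<and> G n P (i, j) = 1" using il id Pab b_def G_eq1[OF il j, of P] by simp
    next
      fix i' assume i': "i' < n^2 \<and> G n P (i', j) = 1"
      then have e: "P (i' div n, b) = (i' mod n + 1, j mod n + 1)"
        using b_def G_eq1[OF _ j, of i' P] by simp
      have i'd: "i' div n < n" using i' lt_sq_iff[OF n, of i'] by simp
      have q1: "i' div n = a"
        by (rule bij_inj[OF Pi_col[OF P b]]) (use i'd a e in simp_all)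
      have q2: "i' mod n = c" using e Pab q1 by simp
      show "i' = i" by (rule dm_eq[where n=n]) (use q1 q2 id in simp_all)
    qed
  qed
  have blk: "\<exists>!p. p \<in> {0..<n^2} \<times> {0..<n^2} \<and> fst p div n = a \<and> snd p div n = b \<and> G n P p = 1"
    if a: "a < n" and b: "b < n" for a b
  proof -
    obtain c where c: "c < n" "fst (P (a,b)) = c + 1"
      using val_dec[of "fst (P (a,b))" n] Pi_val[OF P a b] by (auto simp: mem_Times_iff)
    obtain d where d: "d < n" "snd (P (a,b)) = d + 1"
      using val_dec[of "snd (P (a,b))" n] Pi_val[OF P a b] by (auto simp: mem_Times_iff)
    define i where "i = a*n + c"
    define j where "j = b*n + d"
    have id: "i div n = a" "i mod n = c" using dm_calc[OF n c(1), of a] i_def by auto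
    have jd: "j div n = b" "j mod n = d" using dm_calc[OF n d(1), of b] j_def by auto
    have il: "i < n^2" using id a lt_sq_iff[OF n, of i] by simp
    have jl: "j < n^2" using jd b lt_sq_iff[OF n, of j] by simp
    have Pab: "P (a,b) = (c + 1, d + 1)" using c d by (simp add: prod_eq_iff)
    show ?thesis
    proof (rule ex1I[of _ "(i,j)"])
      show "(i,j) \<in> {0..<n^2} \<times> {0..<n^2} \<and> fst (i,j) div n = a \<and> snd (i,j) div n = b \<and> G n P (i,j) = 1"
        using il jl id jd Pab G_eq1[OF il jl, of P] by simp
    next
      fix p assume p: "p \<in> {0..<n^2} \<times> {0..<n^2} \<and> fst p div n = a \<and> snd p div n = b \<and> G n P p = 1"
      obtain i' j' where pe: "p = (i',j')" by (cases p)
      have l: "i' < n^2" "j' < n^2" using p pe by auto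
      have e: "P (a, b) = (i' mod n + 1, j' mod n + 1)" "i' div n = a" "j' div n = b"
        using p pe G_eq1[OF l, of P] by auto
      have "i' = i" by (rule dm_eq[where n=n]) (use e id Pab in simp_all)
      moreover have "j' = j" by (rule dm_eq[where n=n]) (use e jd Pab in simp_all)
      ultimately show "p = (i,j)" using pe by simp
    qed
  qed
  show ?thesis unfolding Sigma_sq_def mem_Collect_eq
    by (intro conjI allI impI ext row col blk)
qed

lemma GF: assumes M: "M \<in> Sigma_sq n" shows "G n (F n M) = M"
proof (rule extensionalityI)
  show "G n (F n M) \<in> extensional ({0..<n^2} \<times> {0..<n^2})" unfolding G_def by simp
  show "M \<in> extensional ({0..<n^2} \<times> {0..<n^2})" using Sig_ext[OF M] by (simp add: PiE_def)
  fix x assume x: "x \<in> {0..<n^2} \<times> {0..<n^2}"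
  obtain i j where xe: "x = (i,j)" by (cases x)
  have n: "0 < n" using x by (cases "n = 0") auto
  have ab: "i div n < n" "j div n < n" using x xe lt_sq_iff[OF n, of i] lt_sq_iff[OF n, of j] by auto
  note B = blk_props[OF M ab]
  have FM: "F n M (i div n, j div n) = (fst (blk n M (i div n) (j div n)) mod n + 1,
      snd (blk n M (i div n) (j div n)) mod n + 1)" using ab by (simp add: F_def)
  have iff: "F n M (i div n, j div n) = (i mod n + 1, j mod n + 1) \<longleftrightarrow> blk n M (i div n) (j div n) = (i,j)"
  proof
    assume "F n M (i div n, j div n) = (i mod n + 1, j mod n + 1)"
    then have "fst (blk n M (i div n) (j div n)) mod n = i mod n"
      "snd (blk n M (i div n) (j div n)) mod n = j mod n" unfolding FM by simp_all
    then show "blk n M (i div n) (j div n) = (i,j)" using B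
      by (metis dm_eq prod.collapse fst_conv snd_conv)
  next
    assume "blk n M (i div n) (j div n) = (i,j)"
    then show "F n M (i div n, j div n) = (i mod n + 1, j mod n + 1)" unfolding FM by simp
  qed
  have G: "G n (F n M) (i,j) = (if F n M (i div n, j div n) = (i mod n + 1, j mod n + 1) then 1 else 0)"
    using x xe by (simp add: G_def)
  have Mv: "M (i,j) \<in> {0,1}" using Sig_ext[OF M] x xe by auto
  show "G n (F n M) x = M x"
  proof (cases "M (i,j) = 1")
    case True
    then have "blk n M (i div n) (j div n) = (i,j)" using blk_unique[OF M x] xe by simp
    then show ?thesis using G iff True xe by simp
  next
    case False
    then have "blk n M (i div n) (j div n) \<noteq> (i,j)" using B by auto
    then show ?thesis using G iff False Mv xe by auto
  qed
qed

lemma FG: assumes P: "P \<in> Pi_n n" and n: "0 < n" shows "F n (G n P) = P"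
proof (rule extensionalityI)
  show "F n (G n P) \<in> extensional ({0..<n} \<times> {0..<n})" unfolding F_def by simp
  show "P \<in> extensional ({0..<n} \<times> {0..<n})" using Pi_ext[OF P] by (simp add: PiE_def)
  fix x assume x: "x \<in> {0..<n} \<times> {0..<n}"
  obtain a b where xe: "x = (a,b)" by (cases x)
  have ab: "a < n" "b < n" using x xe by auto
  note B = blk_props[OF G_in[OF P n] ab]
  define p where "p = blk n (G n P) a b"
  have "P (fst p div n, snd p div n) = (fst p mod n + 1, snd p mod n + 1)"
    using B p_def G_eq1[where n=n and P=P and i="fst p" and j="snd p"] by (simp add: mem_Times_iff)
  then have "P (a,b) = (fst p mod n + 1, snd p mod n + 1)" using B p_def by simp
  then show "F n (G n P) x = P x" using ab xe p_def by (simp add: F_def)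
qed

theorem lemma2:
  fixes n :: nat
  assumes "n \<ge> 2"
  shows "\<exists>f. bij_betw f (Sigma_sq n) (Pi_n n)"
proof
  have n: "0 < n" using assms by simp
  show "bij_betw (F n) (Sigma_sq n) (Pi_n n)"
  proof (rule bij_betw_byWitness[where f'="G n"])
    show "\<forall>a\<in>Sigma_sq n. G n (F n a) = a" using GF by blast
    show "\<forall>a\<in>Pi_n n. F n (G n a) = a" using FG n by blast
    show "F n ` Sigma_sq n \<subseteq> Pi_n n" using F_in by blast
    show "G n ` Pi_n n \<subseteq> Sigma_sq n" using G_in n by blast
  qed
qed

end
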